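(* Let $F$ be a cellular automaton on $A^{\mathbb N}$ with diameter $\delta$ and local rule $f$. For every $u\in A^\delta$, if $\mathfrak d_L(u^\infty,F(u^\infty))=0$, then there exists $k\in\{0,\dots,\delta-1\}$ such that $F(u^\infty)=\sigma^k(u^\infty)$.
   Context: $A$ is a finite alphabet; $u^\infty=uuu\cdots\in A^{\mathbb N}$; $\sigma(x)_i=x_{i+1}$; $x_{[i,j)}=x_i\cdots x_{j-1}$. A cellular automaton with diameter $\delta\ge1$ is $F:A^{\mathbb N}\to A^{\mathbb N}$ with $F(x)_i=f(x_{[i,i+\delta)})$ for a local rule $f:A^\delta\to A$. The Levenshtein distance is $d_L(u,v)=\frac{|u|+|v|}{2}-\ell$, $\ell$ the length of a longest common subsequence; the Feldman pseudo-metric is $\mathfrak d_L(x,y)=\limsup_{l\to\infty}d_L(x_{[0,l)},y_{[0,l)})/l$. *)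

theory Defs
  imports "HOL-Library.Sublist" "HOL-Library.Extended_Real" "HOL-Library.Liminf_Limsup" Complex_Main
begin

definition periodic :: "'a list \<Rightarrow> nat \<Rightarrow> 'a" where
  "periodic u = (\<lambda>i. u ! (i mod length u))"

definition shift :: "(nat \<Rightarrow> 'a) \<Rightarrow> nat \<Rightarrow> 'a" where
  "shift x = (\<lambda>i. x (Suc i))"

definition CA :: "nat \<Rightarrow> ('a list \<Rightarrow> 'a) \<Rightarrow> (nat \<Rightarrow> 'a) \<Rightarrow> nat \<Rightarrow> 'a" where
  "CA d f x = (\<lambda>i. f (map x [i..<i + d]))"

definition factor :: "(nat \<Rightarrow> 'a) \<Rightarrow> nat \<Rightarrow> nat \<Rightarrow> 'a list" where
  "factor x i j = map x [i..<j]"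

definition lcs_len :: "'a list \<Rightarrow> 'a list \<Rightarrow> nat" where
  "lcs_len u v = Max {length w | w. subseq w u \<and> subseq w v}"

definition lev_dist :: "'a list \<Rightarrow> 'a list \<Rightarrow> real" where
  "lev_dist u v = (real (length u) + real (length v)) / 2 - real (lcs_len u v)"

definition feldman :: "(nat \<Rightarrow> 'a) \<Rightarrow> (nat \<Rightarrow> 'a) \<Rightarrow> ereal" where
  "feldman x y = limsup (\<lambda>l. ereal (lev_dist (factor x 0 l) (factor y 0 l) / real l))"

end

theory Submission
  imports Defs
begin
lemma emb_cons_cases:
  assumes "subseq (c#w) (z#zs)"
  shows "(c = z \<and> subseq w zs) \<or> subseq (c#w) zs"
  using assms by (cases "c = z") auto

lemma key:
  fixes x y :: "nat \<Rightarrow> 'a" and D :: nat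
  assumes H: "\<And>a b. \<not> (\<forall>t<Suc D. y (b+t) = x (a+t))"
  shows "subseq w (map x [a..<a+n]) \<Longrightarrow> subseq w (map y [b..<b+n']) \<Longrightarrow> r \<le> D \<Longrightarrow> r \<le> a \<Longrightarrow> r \<le> b
     \<Longrightarrow> (\<forall>t<r. x (a-r+t) = y (b-r+t)) \<Longrightarrow> length w + r + 2*D*length w \<le> D*(1+n+n')"
proof (induction "n+n'" arbitrary: n n' a b r w rule: less_induct)
  case less
  show ?case
  proof (cases w)
    case Nil then show ?thesis using less by simp
  next
    case (Cons c w')
    have "n \<noteq> 0" using less.prems(1) Cons by (cases n) auto
    then obtain m where m: "n = Suc m" by (cases n) auto
    have "n' \<noteq> 0" using less.prems(2) Cons by (cases n') auto
    then obtain m' where m': "n' = Suc m'" by (cases n') auto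
    have xs: "map x [a..<a+n] = x a # map x [Suc a..<Suc a+m]" unfolding m by (simp del: upt_Suc add: upt_conv_Cons)
    have ys: "map y [b..<b+n'] = y b # map y [Suc b..<Suc b+m']" unfolding m' by (simp del: upt_Suc add: upt_conv_Cons)
    have X: "(c = x a \<and> subseq w' (map x [Suc a..<Suc a+m])) \<or> subseq w (map x [Suc a..<Suc a+m])"
      using emb_cons_cases less.prems(1) xs Cons by metis
    have Y: "(c = y b \<and> subseq w' (map y [Suc b..<Suc b+m'])) \<or> subseq w (map y [Suc b..<Suc b+m'])"
      using emb_cons_cases less.prems(2) ys Cons by metis
    show ?thesis
    proof (cases "subseq w (map x [Suc a..<Suc a+m])")
      case True
      have "length w + 0 + 2*D*length w \<le> D*(1+m+n')"
        using less.hyps[of m n' w "Suc a" b 0] True less.prems m by simp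
      then show ?thesis using m less.prems(3) by (simp add: algebra_simps)
    next
      case F1: False
      show ?thesis
      proof (cases "subseq w (map y [Suc b..<Suc b+m'])")
        case True
        have "length w + 0 + 2*D*length w \<le> D*(1+n+m')"
          using less.hyps[of n m' w a "Suc b" 0] True less.prems m' by simp
        then show ?thesis using m' less.prems(3) by (simp add: algebra_simps)
      next
        case False
        with F1 X Y have c: "c = x a" "c = y b" and s1: "subseq w' (map x [Suc a..<Suc a+m])"
          and s2: "subseq w' (map y [Suc b..<Suc b+m'])" by auto
        show ?thesis
        proof (cases "r = D")
          case True
          have "\<forall>t<Suc D. y (b-r+t) = x (a-r+t)"
          proof (intro allI impI)
            fix t assume "t < Suc D"
            then consider "t < r" | "t = r" using True by linarith
            then show "y (b-r+t) = x (a-r+t)"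
            proof cases
              case 1 then show ?thesis using less.prems(6) by simp
            next
              case 2 then show ?thesis using c less.prems(4,5) by simp
            qed
          qed
          then show ?thesis using H by blast
        next
          case False
          have cond: "\<forall>t<Suc r. x (Suc a - Suc r + t) = y (Suc b - Suc r + t)"
          proof (intro allI impI)
            fix t assume "t < Suc r"
            then consider "t < r" | "t = r" by linarith
            then show "x (Suc a - Suc r + t) = y (Suc b - Suc r + t)"
            proof cases
              case 1 then show ?thesis using less.prems(6) by simp
            next
              case 2 then show ?thesis using c less.prems(4,5) by simp
            qed
          qed
          have "length w' + Suc r + 2*D*length w' \<le> D*(1+m+m')"
            using less.hyps[of m m' w' "Suc a" "Suc b" "Suc r"] s1 s2 cond False less.prems m m' by simp
          then show ?thesis using m m' Cons by (simp add: algebra_simps)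
        qed
      qed
    qed
  qed
qed

lemma funpow_shift: "(shift ^^ k) z = (\<lambda>i. z (i + k))"
  by (induction k) (auto simp: shift_def)

lemma main_aux:
  fixes f :: "('a::finite) list \<Rightarrow> 'a" and \<delta> :: nat and u :: "'a list"
  assumes "\<delta> \<ge> 1"
    and len: "length u = \<delta>"
    and fz: "feldman (periodic u) (CA \<delta> f (periodic u)) = 0"
  shows "\<exists>k \<in> {0..<\<delta>}. CA \<delta> f (periodic u) = (shift ^^ k) (periodic u)"
proof (rule ccontr)
  assume nok: "\<not> ?thesis"
  obtain D where D: "\<delta> = Suc D" using assms(1) by (cases \<delta>) auto
  define x where "x = periodic u"
  define y where "y = CA \<delta> f x"
  have xm: "x i = x j" if "i mod \<delta> = j mod \<delta>" for i j
    using that len by (simp add: x_def periodic_def)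
  have ym: "y i = y j" if h: "i mod \<delta> = j mod \<delta>" for i j
  proof -
    have "map x [i..<i+\<delta>] = map x [j..<j+\<delta>]"
    proof (rule nth_equalityI)
      show "length (map x [i..<i+\<delta>]) = length (map x [j..<j+\<delta>])" by simp
      fix t assume "t < length (map x [i..<i+\<delta>])"
      then have t: "t < \<delta>" by simp
      have "(i + t) mod \<delta> = (j + t) mod \<delta>" using h by (metis mod_add_left_eq)
      then have "x (i+t) = x (j+t)" by (rule xm)
      then show "map x [i..<i+\<delta>] ! t = map x [j..<j+\<delta>] ! t" using t by simp
    qed
    then show ?thesis by (simp add: y_def CA_def)
  qed
  have H: "\<not> (\<forall>t<Suc D. y (b+t) = x (a+t))" for a b
  proof
    assume eq: "\<forall>t<Suc D. y (b+t) = x (a+t)"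
    define k where "k = (a + D*b) mod \<delta>"
    have "y = (shift ^^ k) x"
    proof
      fix j
      define t where "t = (j + D*b) mod \<delta>"
      have t: "t < Suc D" using D by (simp add: t_def)
      have "(b + t) mod \<delta> = (j + \<delta>*b) mod \<delta>" unfolding t_def D by (simp add: mod_simps algebra_simps)
      also have "\<dots> = j mod \<delta>" by simp
      finally have "y j = y (b + t)" by (intro ym) simp
      also have "\<dots> = x (a + t)" using eq t by simp
      also have "\<dots> = x (j + k)"
        by (rule xm) (simp add: t_def k_def mod_simps algebra_simps)
      finally show "y j = (shift ^^ k) x j" by (simp add: funpow_shift)
    qed
    moreover have "k \<in> {0..<\<delta>}" using D by (simp add: k_def)
    ultimately show False using nok unfolding x_def y_def by blast
  qed
  have bound: "real (2*D+1) * real (lcs_len (factor x 0 l) (factor y 0 l)) \<le> real D * (1 + 2 * real l)" for l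
  proof -
    let ?S = "{length w | w. subseq w (factor x 0 l) \<and> subseq w (factor y 0 l)}"
    have fin: "finite ?S"
    proof (rule finite_subset)
      show "?S \<subseteq> {..l}" by (auto simp: factor_def dest: list_emb_length)
    qed simp
    have ne: "?S \<noteq> {}" by auto
    have "lcs_len (factor x 0 l) (factor y 0 l) \<in> ?S"
      unfolding lcs_len_def using Max_in[OF fin ne] by blast
    then obtain w where w: "length w = lcs_len (factor x 0 l) (factor y 0 l)"
      "subseq w (map x [0..<0+l])" "subseq w (map y [0..<0+l])" by (auto simp: factor_def)
    have "length w + 0 + 2*D*length w \<le> D*(1+l+l)"
      by (rule key[OF H w(2) w(3)]) auto
    then have "real (length w + 2*D*length w) \<le> real (D*(1+l+l))" by linarith
    then show ?thesis using w(1) by (simp add: algebra_simps)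
  qed
  define c where "c = 1 / (2 * (2 * real D + 1))"
  have cpos: "c > 0" by (simp add: c_def)
  have ev: "\<forall>\<^sub>F l in sequentially. ereal c \<le> ereal (lev_dist (factor x 0 l) (factor y 0 l) / real l)"
    unfolding eventually_sequentially
  proof (intro exI allI impI)
    fix l :: nat assume l: "2*D+1 \<le> l"
    define L where "L = real (lcs_len (factor x 0 l) (factor y 0 l))"
    have b: "(2 * real D + 1) * L \<le> real D * (1 + 2 * real l)" using bound[of l] by (simp add: L_def add.commute)
    have lr: "2 * real D + 1 \<le> real l" using l by linarith
    have lev: "lev_dist (factor x 0 l) (factor y 0 l) = real l - L"
      by (simp add: lev_dist_def L_def factor_def)
    have "(2 * real D + 1) * (real l - L) \<ge> real l - real D" using b by (simp add: algebra_simps)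
    moreover have "real l - real D \<ge> real l / 2" using lr by linarith
    ultimately have "(2 * real D + 1) * (real l - L) \<ge> real l / 2" by linarith
    then have "c * real l \<le> real l - L" unfolding c_def by (simp add: field_simps)
    moreover have "real l > 0" using lr by linarith
    ultimately have "c \<le> (real l - L) / real l" by (simp add: field_simps)
    then show "ereal c \<le> ereal (lev_dist (factor x 0 l) (factor y 0 l) / real l)" using lev by simp
  qed
  have "ereal c \<le> feldman x y"
    unfolding feldman_def by (rule le_Limsup[OF _ ev]) simp
  then show False using fz cpos by (simp add: x_def y_def)
qed

theorem lemmal:
  fixes f :: "('a::finite) list \<Rightarrow> 'a" and \<delta> :: nat and u :: "'a list"
  assumes "\<delta> \<ge> 1"
    and "length u = \<delta>"
    and "feldman (periodic u) (CA \<delta> f (periodic u)) = 0"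
  shows "\<exists>k \<in> {0..<\<delta>}. CA \<delta> f (periodic u) = (shift ^^ k) (periodic u)"
  using main_aux[OF assms] .

end
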